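(* Let $F$ be the elementary cellular automaton with rule number 5. For every nonempty finite word $u\in\{0,1\}^*$, the deterministic communication complexity of $\textsc{SInv}_{F,u}$ restricted to inputs of length $n$ is bounded by a constant independent of $n$.
   Context: An elementary cellular automaton (ECA) with rule number $N\in\{0,\dots,255\}$ is the map $F:\{0,1\}^{\mathbb Z}\to\{0,1\}^{\mathbb Z}$ given by $F(x)_i=f(x_{i-1},x_i,x_{i+1})$. Here the local rule $f:\{0,1\}^3\to\{0,1\}$ is determined by $N=\sum_{a,b,c\in\{0,1\}}2^{4a+2b+c}f(a,b,c)$. For a nonempty finite word $u$, $p_u\in\{0,1\}^{\mathbb Z}$ is defined by $(p_u)_i=u_{i\bmod |u|}$. For a finite word $x$, $p_u[x]$ is the configuration equal to $x$ on positions $0,\dots,|x|-1$ and to $p_u$ elsewhere. $\textsc{SInv}_{F,u}$ is the decision problem: on input a finite word $x$, decide whether there is an integer $w$ such that for all $t\ge0$ the set of positions where $F^t(p_u)$ and $F^t(p_u[x])$ differ is contained in an interval of length $w$. For each $n$, it is regarded as a function $\{0,1\}^n\to\{0,1\}$. For a function $g:X\times Y\to Z$, $D(g)$ is the minimal depth of a deterministic two-party protocol computing $g$. In such a protocol, Alice knows $x$ and Bob knows $y$. The protocol is a binary tree: each internal node is labelled by a function of Alice's input only or of Bob's input only, with values in $\{\text{left},\text{right}\}$, and each leaf is labelled by an output value. For $g:\{0,1\}^m\to Z$, set $D(g)=\max_{0\le i<m}D(g_i)$, where $g_i:\{0,1\}^i\times\{0,1\}^{m-i}\to Z$ is $g_i(x,y)=g(xy)$.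 *)

theory Defs
  imports Main
begin

type_synonym config = "int \<Rightarrow> bool"

definition eca_local :: "nat \<Rightarrow> bool \<Rightarrow> bool \<Rightarrow> bool \<Rightarrow> bool" where
  "eca_local N a b c = bit N (4 * of_bool a + 2 * of_bool b + of_bool c)"

definition eca :: "nat \<Rightarrow> config \<Rightarrow> config" where
  "eca N x = (\<lambda>i. eca_local N (x (i - 1)) (x i) (x (i + 1)))"

text \<open>Periodic configuration p_u and p_u[x]; words are bool lists (True = 1).\<close>
definition periodic :: "bool list \<Rightarrow> config" where
  "periodic u = (\<lambda>i. u ! nat (i mod int (length u)))"

definition patch :: "bool list \<Rightarrow> bool list \<Rightarrow> config" where
  "patch u x = (\<lambda>i. if 0 \<le> i \<and> i < int (length x) then x ! nat i else periodic u i)"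

definition diff_set :: "nat \<Rightarrow> bool list \<Rightarrow> bool list \<Rightarrow> nat \<Rightarrow> int set" where
  "diff_set N u x t = {i. (eca N ^^ t) (periodic u) i \<noteq> (eca N ^^ t) (patch u x) i}"

definition SInv :: "nat \<Rightarrow> bool list \<Rightarrow> bool list \<Rightarrow> bool" where
  "SInv N u x = (\<exists>w::int. \<forall>t. \<exists>a::int. diff_set N u x t \<subseteq> {a..a + w})"

datatype ('a, 'b, 'z) protocol =
    Leaf 'z
  | AliceNode "'a \<Rightarrow> bool" "('a, 'b, 'z) protocol" "('a, 'b, 'z) protocol"
  | BobNode "'b \<Rightarrow> bool" "('a, 'b, 'z) protocol" "('a, 'b, 'z) protocol"

fun run :: "('a, 'b, 'z) protocol \<Rightarrow> 'a \<Rightarrow> 'b \<Rightarrow> 'z" where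
  "run (Leaf z) x y = z"
| "run (AliceNode f l r) x y = (if f x then run l x y else run r x y)"
| "run (BobNode f l r) x y = (if f y then run l x y else run r x y)"

fun depth :: "('a, 'b, 'z) protocol \<Rightarrow> nat" where
  "depth (Leaf z) = 0"
| "depth (AliceNode f l r) = Suc (max (depth l) (depth r))"
| "depth (BobNode f l r) = Suc (max (depth l) (depth r))"

definition computes :: "('a, 'b, 'z) protocol \<Rightarrow> 'a set \<Rightarrow> 'b set \<Rightarrow> ('a \<Rightarrow> 'b \<Rightarrow> 'z) \<Rightarrow> bool" where
  "computes p X Y g = (\<forall>x\<in>X. \<forall>y\<in>Y. run p x y = g x y)"

definition cc :: "'a set \<Rightarrow> 'b set \<Rightarrow> ('a \<Rightarrow> 'b \<Rightarrow> 'z) \<Rightarrow> nat" where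
  "cc X Y g = (LEAST d. \<exists>p :: ('a, 'b, 'z) protocol. computes p X Y g \<and> depth p = d)"

definition cc_word :: "nat \<Rightarrow> (bool list \<Rightarrow> 'z) \<Rightarrow> nat" where
  "cc_word m g = (if m = 0 then 0 else
     Max ((\<lambda>i. cc {x :: bool list. length x = i} {y :: bool list. length y = m - i}
                   (\<lambda>x y. g (x @ y))) ` {..<m}))"

end

theory Submission
  imports Defs
begin

lemma F5: "eca 5 (x::config) i = (\<not> x (i-1) \<and> \<not> x (i+1))"
proof -
  have "eca_local 5 a b c = (\<not> a \<and> \<not> c)" for a b c
    by (cases a; cases b; cases c; simp add: eca_local_def bit_0)
  thus ?thesis by (simp add: eca_def)
qed

lemma F2: "eca 5 (eca 5 (x::config)) i = (x i \<or> (x (i-2) \<and> x (i+2)))"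
proof -
  have a: "i - 1 - 1 = i - 2" "i - 1 + 1 = i" "i + 1 - 1 = i" "i + 1 + 1 = i + 2" by simp_all
  show ?thesis unfolding F5 a by blast
qed

lemma F4: "eca 5 (eca 5 (eca 5 (eca 5 (x::config)))) = eca 5 (eca 5 x)"
proof
  fix i :: int
  have a: "i - 2 - 2 = i - 4" "i - 2 + 2 = i" "i + 2 - 2 = i" "i + 2 + 2 = i + 4" by simp_all
  show "eca 5 (eca 5 (eca 5 (eca 5 x))) i = eca 5 (eca 5 x) i"
    unfolding F2[of "eca 5 (eca 5 x)"] unfolding F2 a by blast
qed

lemma per: "\<exists>k\<le>3. (eca 5 ^^ t) = (eca 5 ^^ k)"
proof (induction t rule: less_induct)
  case (less t)
  show ?case
  proof (cases "t \<le> 3")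
    case True thus ?thesis by blast
  next
    case False
    then obtain n where n: "t = n + 4" using le_Suc_ex[of 4 t] by (auto simp: add.commute)
    have "(eca 5 ^^ t) = (eca 5 ^^ (n + 2))"
    proof
      fix c
      have "(eca 5 ^^ t) c = (eca 5 ^^ n) ((eca 5 ^^ 4) c)" by (simp add: n funpow_add)
      also have "(eca 5 ^^ 4) c = (eca 5 ^^ 2) c"
        using F4 by (simp add: numeral_eq_Suc)
      also have "(eca 5 ^^ n) ((eca 5 ^^ 2) c) = (eca 5 ^^ (n+2)) c" by (simp only: funpow_add o_apply)
      finally show "(eca 5 ^^ t) c = (eca 5 ^^ (n + 2)) c" .
    qed
    moreover have "n + 2 < t" using n by simp
    ultimately show ?thesis using less by metis
  qed
qed

lemma loc: "(\<forall>j. \<bar>j - i\<bar> \<le> int k \<longrightarrow> c j = d j) \<Longrightarrow> (eca 5 ^^ k) c i = (eca 5 ^^ k) d i"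
proof (induction k arbitrary: i)
  case 0 thus ?case by simp
next
  case (Suc k)
  have "(eca 5 ^^ k) c (i-1) = (eca 5 ^^ k) d (i-1)"
    by (rule Suc.IH) (use Suc.prems in auto)
  moreover have "(eca 5 ^^ k) c (i+1) = (eca 5 ^^ k) d (i+1)"
    by (rule Suc.IH) (use Suc.prems in auto)
  ultimately show ?case unfolding funpow.simps o_apply F5[of "(eca 5 ^^ k) c" i] F5[of "(eca 5 ^^ k) d" i] by simp
qed

lemma sinv_true: "SInv 5 u x"
proof -
  have "diff_set 5 u x t \<subseteq> {-3 .. -3 + (int (length x) + 6)}" for t
  proof
    fix i assume i: "i \<in> diff_set 5 u x t"
    obtain k where k: "k \<le> 3" "(eca 5 ^^ t) = (eca 5 ^^ k)" using per by blast
    show "i \<in> {-3 .. -3 + (int (length x) + 6)}"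
    proof (rule ccontr)
      assume out: "i \<notin> {-3 .. -3 + (int (length x) + 6)}"
      have "(eca 5 ^^ k) (periodic u) i = (eca 5 ^^ k) (patch u x) i"
      proof (rule loc, intro allI impI)
        fix j assume "\<bar>j - i\<bar> \<le> int k"
        with out k(1) have "\<not> (0 \<le> j \<and> j < int (length x))" by auto
        thus "periodic u j = patch u x j" unfolding patch_def by auto
      qed
      with i k(2) show False by (simp add: diff_set_def)
    qed
  qed
  thus ?thesis unfolding SInv_def by blast
qed

lemma cc_true: "cc X Y (\<lambda>x y. True) = 0"
  unfolding cc_def
  by (rule Least_eq_0, rule exI[of _ "Leaf True"], simp add: computes_def)

theorem mainTheorem3:
  fixes u :: "bool list"
  assumes "u \<noteq> []"
  shows "\<exists>C::nat. \<forall>n. cc_word n (SInv 5 u) \<le> C"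
proof (intro exI allI)
  fix n
  have s: "SInv 5 u = (\<lambda>_. True)" using sinv_true by blast
  show "cc_word n (SInv 5 u) \<le> 0"
  proof (cases "n = 0")
    case True thus ?thesis by (simp add: cc_word_def)
  next
    case False
    have "(\<lambda>i. cc {x :: bool list. length x = i} {y :: bool list. length y = n - i}
                   (\<lambda>x y. SInv 5 u (x @ y))) ` {..<n} = {0}"
      using False by (auto simp: s cc_true)
    thus ?thesis using False by (simp add: cc_word_def)
  qed
qed

end
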